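(* Let $\boldsymbol{P}\in\mathbb{R}^{n\times n}$, $\boldsymbol{A}=\mathrm{softmax}(\boldsymbol{P})$ and $\alpha=\max_{i,j}\lvert\boldsymbol{P}_{ij}\rvert$. For $\boldsymbol{X}\in\mathbb{R}^{n\times d}$ and $\boldsymbol{W}_V\in\mathbb{R}^{d\times d}$ define $\mathrm{SA}(\boldsymbol{X})=\boldsymbol{A}\boldsymbol{X}\boldsymbol{W}_V$. Then $$\lVert\mathrm{HC}[\mathrm{SA}(\boldsymbol{X})]\rVert_F\le\sqrt{\frac{n e^{2\alpha}}{e^{2\alpha}+n-1}}\;\lVert\boldsymbol{W}_V\rVert_2\,\lVert\mathrm{HC}[\boldsymbol{X}]\rVert_F .$$ Moreover, if $\boldsymbol{P}=\boldsymbol{X}\boldsymbol{W}_Q(\boldsymbol{X}\boldsymbol{W}_K)^T/\sqrt d$ with $\boldsymbol{W}_Q,\boldsymbol{W}_K\in\mathbb{R}^{d\times d_k}$, and the rows $\boldsymbol{x}_i$ of $\boldsymbol{X}$ satisfy $\lVert\boldsymbol{x}_i\rVert_2\le\gamma$ for all $i$ (some $\gamma>0$), then $\alpha\le\gamma^2\lVert\boldsymbol{W}_Q\boldsymbol{W}_K^T\rVert_2/\sqrt d$.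
   Context: $\mathrm{softmax}$ is applied row-wise: $\mathrm{softmax}(\boldsymbol{P})_{ij}=e^{\boldsymbol{P}_{ij}}/\sum_t e^{\boldsymbol{P}_{it}}$. $\boldsymbol{1}\in\mathbb{R}^n$ is the all-ones vector and for $\boldsymbol{X}\in\mathbb{R}^{n\times d}$, $\mathrm{HC}[\boldsymbol{X}]=(\boldsymbol{I}-\frac1n\boldsymbol{1}\boldsymbol{1}^T)\boldsymbol{X}$ (the high-frequency component, i.e. $\boldsymbol{X}$ minus its column means). $\lVert\cdot\rVert_F$ is the Frobenius norm and $\lVert\cdot\rVert_2$ the spectral norm. *)

theory Defs
  imports "HOL-Analysis.Analysis"
begin

text \<open>Matrices: an n x d real matrix is a value of type real^'d^'n
  (row i is X $ i), with n = CARD('n), d = CARD('d).\<close>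

definition softmax :: "real^'n^'m \<Rightarrow> real^'n^'m" where
  "softmax P = (\<chi> i j. exp (P $ i $ j) / (\<Sum>t\<in>UNIV. exp (P $ i $ t)))"

text \<open>High-frequency component: (I - (1/n) 1 1^T) X, i.e. X minus its column means.\<close>
definition HC :: "real^'d^'n \<Rightarrow> real^'d^'n" where
  "HC X = (\<chi> i k. X $ i $ k - (1 / real CARD('n)) * (\<Sum>j\<in>UNIV. X $ j $ k))"

definition frob_norm :: "real^'d^'n \<Rightarrow> real" where
  "frob_norm X = sqrt (\<Sum>i\<in>UNIV. \<Sum>j\<in>UNIV. (X $ i $ j)^2)"

definition spec_norm :: "real^'d^'n \<Rightarrow> real" where
  "spec_norm W = onorm (\<lambda>x. W *v x)"

definition max_abs_entry :: "real^'d^'n \<Rightarrow> real" where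
  "max_abs_entry P = Max {\<bar>P $ i $ j\<bar> | i j. True}"

definition SA :: "real^'n^'n \<Rightarrow> real^'d^'d \<Rightarrow> real^'d^'n \<Rightarrow> real^'d^'n" where
  "SA P WV X = (softmax P ** X) ** WV"

end

theory Submission
  imports Defs
begin

lemma frob_norm_eq: "frob_norm X = norm X"
  by (simp add: frob_norm_def norm_vec_def L2_set_def real_sqrt_pow2 sum_nonneg)

lemma norm_sq_vec: "(norm (x::real^'d))^2 = (\<Sum>j\<in>UNIV. (x$j)^2)"
  by (simp add: norm_vec_def L2_set_def sum_nonneg)

lemma norm_sq_mat: "(norm (X::real^'d^'n))^2 = (\<Sum>i\<in>UNIV. (norm (X$i))^2)"
  by (simp add: norm_vec_def L2_set_def sum_nonneg)

lemma spec_norm_nonneg: "spec_norm W \<ge> 0"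
  unfolding spec_norm_def by (rule onorm_pos_le) simp

lemma spec_norm_bound: "norm (W *v x) \<le> spec_norm W * norm (x::real^_)"
  unfolding spec_norm_def by (rule onorm) simp

lemma spec_norm_transpose_bound:
  fixes W :: "real^'d^'m"
  shows "norm (transpose W *v x) \<le> spec_norm W * norm x"
proof -
  let ?y = "transpose W *v x"
  have "(norm ?y)^2 = inner ?y ?y" by (simp add: power2_norm_eq_inner)
  also have "\<dots> = inner (x v* W) ?y" by simp
  also have "\<dots> = inner x (W *v ?y)" by (rule dot_lmul_matrix)
  also have "\<dots> \<le> norm x * norm (W *v ?y)" by (rule Cauchy_Schwarz_ineq2[THEN order_trans[OF abs_ge_self]])
  also have "\<dots> \<le> norm x * (spec_norm W * norm ?y)"
    by (rule mult_left_mono[OF spec_norm_bound]) simp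
  finally have h: "norm ?y * norm ?y \<le> (spec_norm W * norm x) * norm ?y"
    by (simp add: power2_eq_square algebra_simps)
  show ?thesis
  proof (cases "norm ?y = 0")
    case True then show ?thesis using spec_norm_nonneg[of W] by simp
  next
    case False then have "norm ?y > 0" by simp
    with h show ?thesis by simp
  qed
qed

lemma row_mult: "((Z::real^'d^'n) ** (W::real^'e^'d)) $ i = transpose W *v (Z $ i)"
  by (simp add: vec_eq_iff matrix_matrix_mult_def matrix_vector_mult_def transpose_def mult.commute)

lemma norm_mult_right: "norm ((Z::real^'d^'n) ** (W::real^'e^'d)) \<le> norm Z * spec_norm W"
proof -
  have "(norm (Z ** W))^2 = (\<Sum>i\<in>UNIV. (norm (transpose W *v (Z $ i)))^2)"
    by (simp add: norm_sq_mat row_mult)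
  also have "\<dots> \<le> (\<Sum>i\<in>UNIV. (spec_norm W * norm (Z$i))^2)"
    by (intro sum_mono power_mono spec_norm_transpose_bound) simp
  also have "\<dots> = (norm Z * spec_norm W)^2"
    by (simp add: norm_sq_mat power_mult_distrib sum_distrib_left mult.commute)
  finally show ?thesis
    using spec_norm_nonneg[of W] by (simp add: power2_le_iff_abs_le)
qed


lemma jensen_sq:
  fixes a z :: "'a \<Rightarrow> real"
  assumes "finite S" "\<And>j. j \<in> S \<Longrightarrow> a j \<ge> 0" "sum a S = 1"
  shows "(\<Sum>j\<in>S. a j * z j)^2 \<le> (\<Sum>j\<in>S. a j * (z j)^2)"
proof -
  define m where "m = (\<Sum>j\<in>S. a j * z j)"
  have "0 \<le> (\<Sum>j\<in>S. a j * (z j - m)^2)"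
    by (intro sum_nonneg mult_nonneg_nonneg assms) auto
  also have "\<dots> = (\<Sum>j\<in>S. a j * (z j)^2) - 2 * m * (\<Sum>j\<in>S. a j * z j) + m^2 * sum a S"
    by (simp add: power2_diff algebra_simps sum.distrib sum_subtractf sum_distrib_left sum_distrib_right)
  also have "\<dots> = (\<Sum>j\<in>S. a j * (z j)^2) - m^2"
    using assms(3) by (simp add: m_def power2_eq_square)
  finally show ?thesis by (simp add: m_def)
qed

lemma norm_sq_entries: "(norm (X::real^'d^'n))^2 = (\<Sum>i\<in>UNIV. \<Sum>k\<in>UNIV. (X$i$k)^2)"
  by (simp add: norm_sq_mat norm_sq_vec)

lemma stoch_bound:
  fixes A :: "real^'n^'n" and Z :: "real^'d^'n"
  assumes nn: "\<And>i j. A$i$j \<ge> 0" and rs: "\<And>i. (\<Sum>j\<in>UNIV. A$i$j) = 1"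
    and ub: "\<And>i j. A$i$j \<le> p"
  shows "(norm (A ** Z))^2 \<le> real CARD('n) * p * (norm Z)^2"
proof -
  have "(norm (A ** Z))^2 = (\<Sum>i\<in>UNIV. \<Sum>k\<in>UNIV. (\<Sum>j\<in>UNIV. A$i$j * Z$j$k)^2)"
    by (simp add: norm_sq_entries matrix_matrix_mult_def)
  also have "\<dots> \<le> (\<Sum>i\<in>UNIV. \<Sum>k\<in>UNIV. \<Sum>j\<in>UNIV. A$i$j * (Z$j$k)^2)"
    by (intro sum_mono jensen_sq) (auto simp: nn rs)
  also have "\<dots> = (\<Sum>j\<in>UNIV. \<Sum>k\<in>UNIV. (\<Sum>i\<in>UNIV. A$i$j) * (Z$j$k)^2)"
  proof -
    have "(\<Sum>i\<in>UNIV. \<Sum>k\<in>UNIV. \<Sum>j\<in>UNIV. A$i$j * (Z$j$k)^2) = (\<Sum>i\<in>UNIV. \<Sum>j\<in>UNIV. \<Sum>k\<in>UNIV. A$i$j * (Z$j$k)^2)"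
      by (rule sum.cong[OF refl], rule sum.swap)
    also have "\<dots> = (\<Sum>j\<in>UNIV. \<Sum>i\<in>UNIV. \<Sum>k\<in>UNIV. A$i$j * (Z$j$k)^2)"
      by (rule sum.swap)
    also have "\<dots> = (\<Sum>j\<in>UNIV. \<Sum>k\<in>UNIV. \<Sum>i\<in>UNIV. A$i$j * (Z$j$k)^2)"
      by (rule sum.cong[OF refl], rule sum.swap)
    finally show ?thesis by (simp add: sum_distrib_right)
  qed
  also have "\<dots> \<le> (\<Sum>j\<in>UNIV. \<Sum>k\<in>UNIV. (real CARD('n) * p) * (Z$j$k)^2)"
  proof (intro sum_mono mult_right_mono)
    fix j show "(\<Sum>i\<in>UNIV. A$i$j) \<le> real CARD('n) * p"
      using sum_bounded_above[of UNIV "\<lambda>i. A$i$j" p] ub by simp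
  qed simp
  also have "\<dots> = real CARD('n) * p * (norm Z)^2"
    by (simp add: norm_sq_entries sum_distrib_left)
  finally show ?thesis .
qed

lemma HC_shift:
  fixes Z1 Z2 :: "real^'d^'n"
  assumes "\<And>i k. Z1$i$k = Z2$i$k + c k"
  shows "HC Z1 = HC Z2"
proof -
  have n: "real CARD('n) > 0" by simp
  have "\<And>k. (1 / real CARD('n)) * (\<Sum>j\<in>UNIV. Z1 $ j $ k) = (1 / real CARD('n)) * (\<Sum>j\<in>UNIV. Z2 $ j $ k) + c k"
    using n by (simp add: assms sum.distrib field_simps)
  then show ?thesis by (simp add: HC_def vec_eq_iff assms)
qed

lemma HC_le: "norm (HC (Z::real^'d^'n)) \<le> norm Z"
proof -
  have col: "(\<Sum>i\<in>UNIV. (Z$i$k - (1 / real CARD('n)) * (\<Sum>j\<in>UNIV. Z$j$k))^2) \<le> (\<Sum>i\<in>UNIV. (Z$i$k)^2)" for k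
  proof -
    define m where "m = (1 / real CARD('n)) * (\<Sum>j\<in>UNIV. Z$j$k)"
    have sm: "(\<Sum>j\<in>UNIV. Z$j$k) = real CARD('n) * m" by (simp add: m_def)
    have "(\<Sum>i\<in>UNIV. (Z$i$k - m)^2) = (\<Sum>i\<in>UNIV. (Z$i$k)^2) - 2 * m * (\<Sum>i\<in>UNIV. Z$i$k) + real CARD('n) * m^2"
      by (simp add: power2_diff sum.distrib sum_subtractf sum_distrib_left algebra_simps)
    also have "\<dots> = (\<Sum>i\<in>UNIV. (Z$i$k)^2) - real CARD('n) * m^2"
      by (simp add: sm power2_eq_square)
    also have "\<dots> \<le> (\<Sum>i\<in>UNIV. (Z$i$k)^2)" by simp
    finally show ?thesis by (simp add: m_def)
  qed
  have "(norm (HC Z))^2 \<le> (norm Z)^2"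
    unfolding norm_sq_entries HC_def
    apply (subst (1 2) sum.swap)
    apply (rule sum_mono) using col by simp
  then show ?thesis by (simp add: power2_le_iff_abs_le)
qed


lemma max_abs_entry_ge: "\<bar>P$i$j\<bar> \<le> max_abs_entry (P::real^'n^'m)"
proof -
  have eq: "{\<bar>P $ i $ j\<bar> | i j. True} = (\<lambda>(i,j). \<bar>P$i$j\<bar>) ` UNIV" by auto
  show ?thesis unfolding max_abs_entry_def eq by (rule Max_ge) auto
qed

lemma max_abs_entry_le:
  assumes "\<And>i j. \<bar>P$i$j\<bar> \<le> b"
  shows "max_abs_entry (P::real^'n^'m) \<le> b"
proof -
  have eq: "{\<bar>P $ i $ j\<bar> | i j. True} = (\<lambda>(i,j). \<bar>P$i$j\<bar>) ` UNIV" by auto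
  show ?thesis unfolding max_abs_entry_def eq using assms by (subst Max_le_iff) auto
qed

lemma softmax_props:
  fixes P :: "real^'n^'n"
  defines "\<alpha> \<equiv> max_abs_entry P"
  shows "softmax P $ i $ j \<ge> 0" "(\<Sum>j\<in>UNIV. softmax P $ i $ j) = 1"
    "softmax P $ i $ j \<le> exp (2*\<alpha>) / (exp (2*\<alpha>) + real CARD('n) - 1)"
proof -
  define S where "S = (\<Sum>t\<in>UNIV. exp (P $ i $ t))"
  have Spos: "S > 0" unfolding S_def by (intro sum_pos) auto
  have A: "softmax P $ i $ j = exp (P$i$j) / S" by (simp add: softmax_def S_def)
  show "softmax P $ i $ j \<ge> 0" using A Spos by simp
  show "(\<Sum>j\<in>UNIV. softmax P $ i $ j) = 1"
    using Spos by (simp add: softmax_def S_def[symmetric] sum_divide_distrib[symmetric])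
  define e where "e = exp \<alpha>"
  have epos: "e > 0" by (simp add: e_def)
  define c where "c = (real CARD('n) - 1) / e"
  have n1: "real CARD('n) \<ge> 1"
  proof -
    have "CARD('n) > 0" by simp
    then show ?thesis by linarith
  qed
  have cnn: "c \<ge> 0" using n1 epos by (simp add: c_def)
  have low: "exp (P$i$t) \<ge> 1 / e" for t
  proof -
    have "- \<alpha> \<le> P$i$t" using max_abs_entry_ge[of P i t] by (simp add: \<alpha>_def)
    then have "exp (-\<alpha>) \<le> exp (P$i$t)" by simp
    then show ?thesis by (simp add: e_def exp_minus field_simps)
  qed
  have "S = exp (P$i$j) + (\<Sum>t\<in>UNIV - {j}. exp (P$i$t))"
    unfolding S_def by (simp add: sum.remove)
  moreover have "(\<Sum>t\<in>UNIV - {j}. exp (P$i$t)) \<ge> real (card (UNIV - {j} :: 'n set)) * (1/e)"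
    using sum_bounded_below[of "UNIV - {j}" "1/e" "\<lambda>t. exp (P$i$t)"] low by simp
  moreover have "real (card (UNIV - {j} :: 'n set)) = real CARD('n) - 1"
    using n1 by (simp add: card_Diff_singleton of_nat_diff)
  ultimately have Sge: "S \<ge> exp (P$i$j) + c" by (simp add: c_def)
  define a where "a = exp (P$i$j)"
  have apos: "a > 0" by (simp add: a_def)
  have ale: "a \<le> e" using max_abs_entry_ge[of P i j] by (simp add: a_def e_def \<alpha>_def)
  have "a / S \<le> a / (a + c)"
    using Sge apos cnn Spos by (intro divide_left_mono) (auto simp: a_def intro!: mult_pos_pos add_pos_nonneg)
  also have "\<dots> \<le> e / (e + c)"
    using apos cnn ale epos mult_right_mono[OF ale cnn] by (simp add: divide_simps algebra_simps)
  also have "\<dots> = exp (2*\<alpha>) / (exp (2*\<alpha>) + real CARD('n) - 1)"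
  proof -
    have "exp (2*\<alpha>) = e * e" unfolding e_def by (subst mult_2, rule exp_add)
    then show ?thesis using epos by (simp add: c_def field_simps)
  qed
  finally show "softmax P $ i $ j \<le> exp (2*\<alpha>) / (exp (2*\<alpha>) + real CARD('n) - 1)"
    using A by (simp add: a_def)
qed


lemma AX_shift:
  fixes A :: "real^'n^'n" and X :: "real^'d^'n" and W :: "real^'e^'d"
  assumes rs: "\<And>i. (\<Sum>j\<in>UNIV. A$i$j) = 1"
  shows "((A ** X) ** W)$i$l = ((A ** HC X) ** W)$i$l
     + (\<Sum>k\<in>UNIV. ((1 / real CARD('n)) * (\<Sum>j\<in>UNIV. X$j$k)) * W$k$l)"
proof -
  define m where "m k = (1 / real CARD('n)) * (\<Sum>j\<in>UNIV. X$j$k)" for k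
  have 1: "(A ** X)$i$k = (A ** HC X)$i$k + m k" for i k
  proof -
    have "(A ** HC X)$i$k = (\<Sum>j\<in>UNIV. A$i$j * X$j$k) - m k * (\<Sum>j\<in>UNIV. A$i$j)"
      by (simp add: matrix_matrix_mult_def HC_def m_def right_diff_distrib sum_subtractf sum_distrib_right sum_divide_distrib algebra_simps)
    then show ?thesis using rs by (simp add: matrix_matrix_mult_def)
  qed
  have "((A ** X) ** W)$i$l = (\<Sum>k\<in>UNIV. ((A ** HC X)$i$k + m k) * W$k$l)"
    by (simp add: matrix_matrix_mult_def[of "A ** X"] 1)
  also have "\<dots> = ((A ** HC X) ** W)$i$l + (\<Sum>k\<in>UNIV. m k * W$k$l)"
    by (simp add: matrix_matrix_mult_def[of "A ** HC X"] distrib_right sum.distrib)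
  finally show ?thesis by (simp add: m_def)
qed

lemma entry_bilinear:
  fixes X :: "real^'d^'n" and WQ WK :: "real^'k^'d"
  shows "((X ** WQ) ** transpose (X ** WK))$i$j = inner (X$i) ((WQ ** transpose WK) *v (X$j))"
proof -
  have e: "(X ** WQ) ** transpose (X ** WK) = (X ** (WQ ** transpose WK)) ** transpose X"
    by (simp add: matrix_transpose_mul matrix_mul_assoc)
  have "((X ** (WQ ** transpose WK)) ** transpose X)$i$j = inner ((X ** (WQ ** transpose WK))$i) (X$j)"
    by (simp add: matrix_matrix_mult_def transpose_def inner_vec_def mult.commute)
  also have "\<dots> = inner ((X$i) v* (WQ ** transpose WK)) (X$j)"
    by (simp add: row_mult)
  also have "\<dots> = inner (X$i) ((WQ ** transpose WK) *v (X$j))" by (rule dot_lmul_matrix)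
  finally show ?thesis by (simp add: e)
qed

theorem theorem3:
  fixes P :: "real^'n^'n" and X :: "real^'d^'n" and WV :: "real^'d^'d"
  shows "frob_norm (HC (SA P WV X))
           \<le> sqrt (real CARD('n) * exp (2 * max_abs_entry P)
                    / (exp (2 * max_abs_entry P) + real CARD('n) - 1))
             * spec_norm WV * frob_norm (HC X)
         \<and> (\<forall>(WQ :: real^'k^'d) (WK :: real^'k^'d) (\<gamma> :: real).
              P = (1 / sqrt (real CARD('d))) *\<^sub>R ((X ** WQ) ** transpose (X ** WK))
              \<and> \<gamma> > 0 \<and> (\<forall>i. norm (X $ i) \<le> \<gamma>)
              \<longrightarrow> max_abs_entry P \<le> \<gamma>^2 * spec_norm (WQ ** transpose WK) / sqrt (real CARD('d)))"
proof (intro conjI allI impI)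
  define \<alpha> where "\<alpha> = max_abs_entry P"
  define p where "p = exp (2*\<alpha>) / (exp (2*\<alpha>) + real CARD('n) - 1)"
  define A where "A = softmax P"
  note sp = softmax_props[of P, folded \<alpha>_def A_def p_def]
  have "HC (SA P WV X) = HC ((A ** HC X) ** WV)"
    unfolding SA_def A_def[symmetric] by (rule HC_shift, rule AX_shift, rule sp(2))
  then have "frob_norm (HC (SA P WV X)) \<le> norm ((A ** HC X) ** WV)"
    by (simp add: frob_norm_eq HC_le)
  also have "\<dots> \<le> norm (A ** HC X) * spec_norm WV" by (rule norm_mult_right)
  also have "\<dots> \<le> (sqrt (real CARD('n) * p) * norm (HC X)) * spec_norm WV"
  proof (rule mult_right_mono[OF _ spec_norm_nonneg])
    have "(norm (A ** HC X))^2 \<le> real CARD('n) * p * (norm (HC X))^2"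
      by (rule stoch_bound) (use sp in \<open>auto simp: p_def\<close>)
    then have "sqrt ((norm (A ** HC X))^2) \<le> sqrt (real CARD('n) * p * (norm (HC X))^2)"
      by (rule real_sqrt_le_mono)
    then show "norm (A ** HC X) \<le> sqrt (real CARD('n) * p) * norm (HC X)"
      by (simp add: real_sqrt_mult)
  qed
  finally show "frob_norm (HC (SA P WV X))
           \<le> sqrt (real CARD('n) * exp (2 * max_abs_entry P)
                    / (exp (2 * max_abs_entry P) + real CARD('n) - 1))
             * spec_norm WV * frob_norm (HC X)"
    by (simp add: p_def \<alpha>_def frob_norm_eq mult_ac)
next
  fix WQ WK :: "real^'k^'d" and \<gamma> :: real
  assume h: "P = (1 / sqrt (real CARD('d))) *\<^sub>R ((X ** WQ) ** transpose (X ** WK))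
              \<and> \<gamma> > 0 \<and> (\<forall>i. norm (X $ i) \<le> \<gamma>)"
  define M where "M = WQ ** transpose WK"
  have dpos: "sqrt (real CARD('d)) > 0" by simp
  show "max_abs_entry P \<le> \<gamma>^2 * spec_norm (WQ ** transpose WK) / sqrt (real CARD('d))"
  proof (rule max_abs_entry_le)
    fix i j
    have Pij: "P$i$j = inner (X$i) (M *v (X$j)) / sqrt (real CARD('d))"
      using h by (simp add: entry_bilinear M_def)
    have "\<bar>inner (X$i) (M *v (X$j))\<bar> \<le> norm (X$i) * norm (M *v (X$j))"
      by (rule Cauchy_Schwarz_ineq2)
    also have "\<dots> \<le> \<gamma> * (spec_norm M * \<gamma>)"
    proof (rule mult_mono)
      show "norm (X$i) \<le> \<gamma>" using h by simp
      show "norm (M *v (X$j)) \<le> spec_norm M * \<gamma>"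
        using spec_norm_bound[of M "X$j"] h spec_norm_nonneg[of M]
        by (meson mult_left_mono order_trans)
    qed (use h in auto)
    finally have "\<bar>inner (X$i) (M *v (X$j))\<bar> \<le> \<gamma>^2 * spec_norm M"
      by (simp add: power2_eq_square mult_ac)
    then show "\<bar>P$i$j\<bar> \<le> \<gamma>^2 * spec_norm (WQ ** transpose WK) / sqrt (real CARD('d))"
      using dpos by (simp add: Pij M_def abs_div divide_right_mono)
  qed
qed

end
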